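(* Let $n$ be a positive integer and let $a,b$ be distinct integers with $0<a,b<n$, so that $G=C_{2n}(a,b,n)$ is a $5$-regular circulant graph. If $3$ divides none of the integers $a$, $b$, $2n-a$, $2n-b$, $n$, then $G$ is word-representable.
   Context: Two distinct letters $x,y$ alternate in a word $w$ if, after deleting all other letters from $w$, the resulting word is of the form $xyxy\cdots$ or $yxyx\cdots$ (of even or odd length). A graph $G=(V,E)$ is word-representable if there is a word $w$ over the alphabet $V$, containing every letter of $V$ at least once, such that for all distinct $x,y\in V$, $xy\in E$ if and only if $x$ and $y$ alternate in $w$. For an integer $m$ and a set $R$ of positive integers each at most $m/2$, the circulant graph $C_m(R)$ has vertex set $\{0,1,\dots,m-1\}$, with $i$ and $j$ adjacent iff $\min(|i-j|,\,m-|i-j|)\in R$. $C_{2n}(a,b,n)$ denotes the circulant graph on $2n$ vertices with jump set $\{a,b,n\}$. *)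

theory Defs
  imports Main
begin

definition alternate :: "'a list \<Rightarrow> 'a \<Rightarrow> 'a \<Rightarrow> bool" where
  "alternate w x y \<longleftrightarrow>
     (let u = filter (\<lambda>z. z = x \<or> z = y) w in
        \<forall>i. Suc i < length u \<longrightarrow> u ! i \<noteq> u ! Suc i)"

definition word_representable :: "'a set \<Rightarrow> ('a \<Rightarrow> 'a \<Rightarrow> bool) \<Rightarrow> bool" where
  "word_representable V E \<longleftrightarrow>
     (\<exists>w. set w = V \<and>
        (\<forall>x\<in>V. \<forall>y\<in>V. x \<noteq> y \<longrightarrow> (E x y \<longleftrightarrow> alternate w x y)))"

definition circ_vertices :: "nat \<Rightarrow> nat set" where
  "circ_vertices m = {0..<m}"

definition circ_adj :: "nat \<Rightarrow> nat set \<Rightarrow> nat \<Rightarrow> nat \<Rightarrow> bool" where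
  "circ_adj m R i j \<longleftrightarrow>
     (let d = (if i \<le> j then j - i else i - j) in min d (m - d) \<in> R)"

end

theory Submission imports Defs begin
lemma filt2: "u \<noteq> v \<Longrightarrow> filter (\<lambda>z. z = u \<or> z = v) (filter Q [0..<N]) =
  (if u < v then (if Q u \<and> u < N then [u] else []) @ (if Q v \<and> v < N then [v] else [])
   else (if Q v \<and> v < N then [v] else []) @ (if Q u \<and> u < N then [u] else []))"
  by (induction N) auto

definition blk :: "nat \<Rightarrow> nat \<Rightarrow> nat list" where "blk N c = filter (\<lambda>v. v mod 3 = c) [0..<N]"
definition blkm :: "nat \<Rightarrow> nat \<Rightarrow> nat \<Rightarrow> nat list" where
  "blkm N c z = filter (\<lambda>v. v mod 3 = c \<and> v \<noteq> z) [0..<N]"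
definition plain :: "nat \<Rightarrow> nat list" where "plain N = blk N 0 @ blk N 1 @ blk N 2"
definition rrev :: "nat \<Rightarrow> nat list" where "rrev N = rev (blk N 0) @ rev (blk N 1) @ rev (blk N 2)"
definition swapg :: "nat \<Rightarrow> nat \<Rightarrow> nat \<Rightarrow> nat list" where
 "swapg N x y = (if x mod 3 = 0 then blkm N 0 x @ [y,x] @ blkm N 1 y @ blk N 2 @ plain N
   else if x mod 3 = 1 then blk N 0 @ blkm N 1 x @ [y,x] @ blkm N 2 y @ plain N
   else blk N 0 @ blk N 1 @ blkm N 2 x @ [y,x] @ blkm N 0 y @ blk N 1 @ blk N 2)"


lemma F_blk: "u \<noteq> v \<Longrightarrow> u < N \<Longrightarrow> v < N \<Longrightarrow> filter (\<lambda>z. z = u \<or> z = v) (blk N c) =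
  (if u < v then (if u mod 3 = c then [u] else []) @ (if v mod 3 = c then [v] else [])
   else (if v mod 3 = c then [v] else []) @ (if u mod 3 = c then [u] else []))"
  unfolding blk_def by (subst filt2) auto

lemma F_blkm: "u \<noteq> v \<Longrightarrow> u < N \<Longrightarrow> v < N \<Longrightarrow> filter (\<lambda>z. z = u \<or> z = v) (blkm N c x) =
  (if u < v then (if u mod 3 = c \<and> u \<noteq> x then [u] else []) @ (if v mod 3 = c \<and> v \<noteq> x then [v] else [])
   else (if v mod 3 = c \<and> v \<noteq> x then [v] else []) @ (if u mod 3 = c \<and> u \<noteq> x then [u] else []))"
  unfolding blkm_def by (subst filt2) auto

lemma mod3_cases: "(u::nat) mod 3 = 0 \<or> u mod 3 = 1 \<or> u mod 3 = 2" by arith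

lemma F_plain:
  assumes "u \<noteq> v" "u mod 3 \<noteq> v mod 3" "u < N" "v < N"
  shows "filter (\<lambda>z. z = u \<or> z = v) (plain N) = (if u mod 3 < v mod 3 then [u,v] else [v,u])"
  using assms mod3_cases[of u] mod3_cases[of v] unfolding plain_def
  by (auto simp add: F_blk simp del: filter_filter)

lemma F_rrev:
  assumes "u \<noteq> v" "u mod 3 \<noteq> v mod 3" "u < N" "v < N"
  shows "filter (\<lambda>z. z = u \<or> z = v) (rrev N) = (if u mod 3 < v mod 3 then [u,v] else [v,u])"
  using assms mod3_cases[of u] mod3_cases[of v] unfolding rrev_def
  by (auto simp add: F_blk rev_filter[symmetric] simp del: filter_filter)

lemma F_blkX: "u mod 3 \<noteq> v mod 3 \<Longrightarrow> u < N \<Longrightarrow> v < N \<Longrightarrow> filter (\<lambda>z. z = u \<or> z = v) (blk N c) =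
  (if u mod 3 = c then [u] else []) @ (if v mod 3 = c then [v] else [])"
  by (subst F_blk) auto

lemma F_blkmX: "u mod 3 \<noteq> v mod 3 \<Longrightarrow> u < N \<Longrightarrow> v < N \<Longrightarrow> filter (\<lambda>z. z = u \<or> z = v) (blkm N c x) =
  (if u mod 3 = c \<and> u \<noteq> x then [u] else []) @ (if v mod 3 = c \<and> v \<noteq> x then [v] else [])"
  by (subst F_blkm) auto

lemma swo_0_0_1:
  assumes "u \<noteq> v" "u mod 3 \<noteq> v mod 3" "x mod 3 = 0" "y mod 3 = 1"
    "\<not>((x = u \<and> y = v) \<or> (x = v \<and> y = u))" "u < N" "v < N" "u mod 3 = 0" "v mod 3 = 1"
  shows "filter (\<lambda>z. z = u \<or> z = v) (swapg N x y) = filter (\<lambda>z. z = u \<or> z = v) (plain N @ plain N)"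
  using assms unfolding swapg_def plain_def
  by (simp add: F_blkX F_blkmX del: filter_filter) auto

lemma swo_0_0_2:
  assumes "u \<noteq> v" "u mod 3 \<noteq> v mod 3" "x mod 3 = 0" "y mod 3 = 1"
    "\<not>((x = u \<and> y = v) \<or> (x = v \<and> y = u))" "u < N" "v < N" "u mod 3 = 0" "v mod 3 = 2"
  shows "filter (\<lambda>z. z = u \<or> z = v) (swapg N x y) = filter (\<lambda>z. z = u \<or> z = v) (plain N @ plain N)"
  using assms unfolding swapg_def plain_def
  by (simp add: F_blkX F_blkmX del: filter_filter) auto

lemma swo_0_1_0:
  assumes "u \<noteq> v" "u mod 3 \<noteq> v mod 3" "x mod 3 = 0" "y mod 3 = 1"
    "\<not>((x = u \<and> y = v) \<or> (x = v \<and> y = u))" "u < N" "v < N" "u mod 3 = 1" "v mod 3 = 0"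
  shows "filter (\<lambda>z. z = u \<or> z = v) (swapg N x y) = filter (\<lambda>z. z = u \<or> z = v) (plain N @ plain N)"
  using assms unfolding swapg_def plain_def
  by (simp add: F_blkX F_blkmX del: filter_filter) auto

lemma swo_0_1_2:
  assumes "u \<noteq> v" "u mod 3 \<noteq> v mod 3" "x mod 3 = 0" "y mod 3 = 1"
    "\<not>((x = u \<and> y = v) \<or> (x = v \<and> y = u))" "u < N" "v < N" "u mod 3 = 1" "v mod 3 = 2"
  shows "filter (\<lambda>z. z = u \<or> z = v) (swapg N x y) = filter (\<lambda>z. z = u \<or> z = v) (plain N @ plain N)"
  using assms unfolding swapg_def plain_def
  by (simp add: F_blkX F_blkmX del: filter_filter) auto

lemma swo_0_2_0:
  assumes "u \<noteq> v" "u mod 3 \<noteq> v mod 3" "x mod 3 = 0" "y mod 3 = 1"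
    "\<not>((x = u \<and> y = v) \<or> (x = v \<and> y = u))" "u < N" "v < N" "u mod 3 = 2" "v mod 3 = 0"
  shows "filter (\<lambda>z. z = u \<or> z = v) (swapg N x y) = filter (\<lambda>z. z = u \<or> z = v) (plain N @ plain N)"
  using assms unfolding swapg_def plain_def
  by (simp add: F_blkX F_blkmX del: filter_filter) auto

lemma swo_0_2_1:
  assumes "u \<noteq> v" "u mod 3 \<noteq> v mod 3" "x mod 3 = 0" "y mod 3 = 1"
    "\<not>((x = u \<and> y = v) \<or> (x = v \<and> y = u))" "u < N" "v < N" "u mod 3 = 2" "v mod 3 = 1"
  shows "filter (\<lambda>z. z = u \<or> z = v) (swapg N x y) = filter (\<lambda>z. z = u \<or> z = v) (plain N @ plain N)"
  using assms unfolding swapg_def plain_def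
  by (simp add: F_blkX F_blkmX del: filter_filter) auto

lemma swo_1_0_1:
  assumes "u \<noteq> v" "u mod 3 \<noteq> v mod 3" "x mod 3 = 1" "y mod 3 = 2"
    "\<not>((x = u \<and> y = v) \<or> (x = v \<and> y = u))" "u < N" "v < N" "u mod 3 = 0" "v mod 3 = 1"
  shows "filter (\<lambda>z. z = u \<or> z = v) (swapg N x y) = filter (\<lambda>z. z = u \<or> z = v) (plain N @ plain N)"
  using assms unfolding swapg_def plain_def
  by (simp add: F_blkX F_blkmX del: filter_filter) auto

lemma swo_1_0_2:
  assumes "u \<noteq> v" "u mod 3 \<noteq> v mod 3" "x mod 3 = 1" "y mod 3 = 2"
    "\<not>((x = u \<and> y = v) \<or> (x = v \<and> y = u))" "u < N" "v < N" "u mod 3 = 0" "v mod 3 = 2"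
  shows "filter (\<lambda>z. z = u \<or> z = v) (swapg N x y) = filter (\<lambda>z. z = u \<or> z = v) (plain N @ plain N)"
  using assms unfolding swapg_def plain_def
  by (simp add: F_blkX F_blkmX del: filter_filter) auto

lemma swo_1_1_0:
  assumes "u \<noteq> v" "u mod 3 \<noteq> v mod 3" "x mod 3 = 1" "y mod 3 = 2"
    "\<not>((x = u \<and> y = v) \<or> (x = v \<and> y = u))" "u < N" "v < N" "u mod 3 = 1" "v mod 3 = 0"
  shows "filter (\<lambda>z. z = u \<or> z = v) (swapg N x y) = filter (\<lambda>z. z = u \<or> z = v) (plain N @ plain N)"
  using assms unfolding swapg_def plain_def
  by (simp add: F_blkX F_blkmX del: filter_filter) auto

lemma swo_1_1_2:
  assumes "u \<noteq> v" "u mod 3 \<noteq> v mod 3" "x mod 3 = 1" "y mod 3 = 2"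
    "\<not>((x = u \<and> y = v) \<or> (x = v \<and> y = u))" "u < N" "v < N" "u mod 3 = 1" "v mod 3 = 2"
  shows "filter (\<lambda>z. z = u \<or> z = v) (swapg N x y) = filter (\<lambda>z. z = u \<or> z = v) (plain N @ plain N)"
  using assms unfolding swapg_def plain_def
  by (simp add: F_blkX F_blkmX del: filter_filter) auto

lemma swo_1_2_0:
  assumes "u \<noteq> v" "u mod 3 \<noteq> v mod 3" "x mod 3 = 1" "y mod 3 = 2"
    "\<not>((x = u \<and> y = v) \<or> (x = v \<and> y = u))" "u < N" "v < N" "u mod 3 = 2" "v mod 3 = 0"
  shows "filter (\<lambda>z. z = u \<or> z = v) (swapg N x y) = filter (\<lambda>z. z = u \<or> z = v) (plain N @ plain N)"
  using assms unfolding swapg_def plain_def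
  by (simp add: F_blkX F_blkmX del: filter_filter) auto

lemma swo_1_2_1:
  assumes "u \<noteq> v" "u mod 3 \<noteq> v mod 3" "x mod 3 = 1" "y mod 3 = 2"
    "\<not>((x = u \<and> y = v) \<or> (x = v \<and> y = u))" "u < N" "v < N" "u mod 3 = 2" "v mod 3 = 1"
  shows "filter (\<lambda>z. z = u \<or> z = v) (swapg N x y) = filter (\<lambda>z. z = u \<or> z = v) (plain N @ plain N)"
  using assms unfolding swapg_def plain_def
  by (simp add: F_blkX F_blkmX del: filter_filter) auto

lemma swo_2_0_1:
  assumes "u \<noteq> v" "u mod 3 \<noteq> v mod 3" "x mod 3 = 2" "y mod 3 = 0"
    "\<not>((x = u \<and> y = v) \<or> (x = v \<and> y = u))" "u < N" "v < N" "u mod 3 = 0" "v mod 3 = 1"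
  shows "filter (\<lambda>z. z = u \<or> z = v) (swapg N x y) = filter (\<lambda>z. z = u \<or> z = v) (plain N @ plain N)"
  using assms unfolding swapg_def plain_def
  by (simp add: F_blkX F_blkmX del: filter_filter) auto

lemma swo_2_0_2:
  assumes "u \<noteq> v" "u mod 3 \<noteq> v mod 3" "x mod 3 = 2" "y mod 3 = 0"
    "\<not>((x = u \<and> y = v) \<or> (x = v \<and> y = u))" "u < N" "v < N" "u mod 3 = 0" "v mod 3 = 2"
  shows "filter (\<lambda>z. z = u \<or> z = v) (swapg N x y) = filter (\<lambda>z. z = u \<or> z = v) (plain N @ plain N)"
  using assms unfolding swapg_def plain_def
  by (simp add: F_blkX F_blkmX del: filter_filter) auto

lemma swo_2_1_0:
  assumes "u \<noteq> v" "u mod 3 \<noteq> v mod 3" "x mod 3 = 2" "y mod 3 = 0"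
    "\<not>((x = u \<and> y = v) \<or> (x = v \<and> y = u))" "u < N" "v < N" "u mod 3 = 1" "v mod 3 = 0"
  shows "filter (\<lambda>z. z = u \<or> z = v) (swapg N x y) = filter (\<lambda>z. z = u \<or> z = v) (plain N @ plain N)"
  using assms unfolding swapg_def plain_def
  by (simp add: F_blkX F_blkmX del: filter_filter) auto

lemma swo_2_1_2:
  assumes "u \<noteq> v" "u mod 3 \<noteq> v mod 3" "x mod 3 = 2" "y mod 3 = 0"
    "\<not>((x = u \<and> y = v) \<or> (x = v \<and> y = u))" "u < N" "v < N" "u mod 3 = 1" "v mod 3 = 2"
  shows "filter (\<lambda>z. z = u \<or> z = v) (swapg N x y) = filter (\<lambda>z. z = u \<or> z = v) (plain N @ plain N)"
  using assms unfolding swapg_def plain_def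
  by (simp add: F_blkX F_blkmX del: filter_filter) auto

lemma swo_2_2_0:
  assumes "u \<noteq> v" "u mod 3 \<noteq> v mod 3" "x mod 3 = 2" "y mod 3 = 0"
    "\<not>((x = u \<and> y = v) \<or> (x = v \<and> y = u))" "u < N" "v < N" "u mod 3 = 2" "v mod 3 = 0"
  shows "filter (\<lambda>z. z = u \<or> z = v) (swapg N x y) = filter (\<lambda>z. z = u \<or> z = v) (plain N @ plain N)"
  using assms unfolding swapg_def plain_def
  by (simp add: F_blkX F_blkmX del: filter_filter) auto

lemma swo_2_2_1:
  assumes "u \<noteq> v" "u mod 3 \<noteq> v mod 3" "x mod 3 = 2" "y mod 3 = 0"
    "\<not>((x = u \<and> y = v) \<or> (x = v \<and> y = u))" "u < N" "v < N" "u mod 3 = 2" "v mod 3 = 1"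
  shows "filter (\<lambda>z. z = u \<or> z = v) (swapg N x y) = filter (\<lambda>z. z = u \<or> z = v) (plain N @ plain N)"
  using assms unfolding swapg_def plain_def
  by (simp add: F_blkX F_blkmX del: filter_filter) auto

lemma F_swapg_other:
  assumes "u \<noteq> v" "u mod 3 \<noteq> v mod 3" "(x mod 3 + 1) mod 3 = y mod 3"
    "\<not>((x = u \<and> y = v) \<or> (x = v \<and> y = u))" "u < N" "v < N"
  shows "filter (\<lambda>z. z = u \<or> z = v) (swapg N x y) = filter (\<lambda>z. z = u \<or> z = v) (plain N @ plain N)"
proof -
  have cy: "(x mod 3 = 0 \<and> y mod 3 = 1) \<or> (x mod 3 = 1 \<and> y mod 3 = 2) \<or> (x mod 3 = 2 \<and> y mod 3 = 0)"
    using assms(3) mod3_cases[of x] by auto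
  show ?thesis
    using cy mod3_cases[of u] mod3_cases[of v] assms(2)
    by (elim disjE conjE) (simp_all add: swo_0_0_1 swo_0_0_2 swo_0_1_0 swo_0_1_2 swo_0_2_0 swo_0_2_1 swo_1_0_1 swo_1_0_2 swo_1_1_0 swo_1_1_2 swo_1_2_0 swo_1_2_1 swo_2_0_1 swo_2_0_2 swo_2_1_0 swo_2_1_2 swo_2_2_0 swo_2_2_1 assms)
qed

lemma F_swapg_self:
  assumes "x \<noteq> y" "(x mod 3 + 1) mod 3 = y mod 3" "x < N" "y < N"
  shows "\<exists>A s B. filter (\<lambda>z. z = x \<or> z = y) (swapg N x y) = A @ [s,s] @ B"
proof -
  have ne: "x mod 3 \<noteq> y mod 3" using assms(2) by presburger
  have "filter (\<lambda>z. z = x \<or> z = y) (swapg N x y) = [y,x,x,y] \<or>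
        filter (\<lambda>z. z = x \<or> z = y) (swapg N x y) = [y,y,x,x]"
    using assms mod3_cases[of x] ne unfolding swapg_def plain_def
    apply (elim disjE)
    apply (simp_all add: F_blkX F_blkmX del: filter_filter)
    done
  then show ?thesis by (metis append.left_neutral append_Cons)
qed

lemma noalt:
  assumes "filter P w = A @ [s,s] @ B"
  shows "\<not> (let u = filter P w in \<forall>i. Suc i < length u \<longrightarrow> u ! i \<noteq> u ! Suc i)"
  using assms by (auto simp: Let_def intro!: exI[of _ "length A"] simp: nth_append)

lemma concat_rep_nth:
  "i < 2 * k \<Longrightarrow> concat (replicate k [p,q]) ! i = (if even i then p else q)"
proof (induction k arbitrary: i)
  case 0 then show ?case by simp
next
  case (Suc k)
  show ?case
  proof (cases "i < 2")
    case True then show ?thesis by (cases i) (auto simp: nth_append less_Suc_eq)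
  next
    case False
    then obtain j where j: "i = Suc (Suc j)" by (metis add_2_eq_Suc le_add_diff_inverse not_less)
    then show ?thesis using Suc by simp
  qed
qed

lemma alt_rep:
  assumes "p \<noteq> q" "filter P w = concat (replicate k [p,q])"
  shows "let u = filter P w in \<forall>i. Suc i < length u \<longrightarrow> u ! i \<noteq> u ! Suc i"
  using assms by (auto simp: Let_def concat_rep_nth length_concat sum_list_replicate)

lemma concat_rep2: "concat (replicate k (xs @ xs)) = concat (replicate (2*k) xs)"
  by (induction k) auto


definition swc :: "(nat \<Rightarrow> nat \<Rightarrow> bool) \<Rightarrow> nat \<Rightarrow> nat \<Rightarrow> bool" where
  "swc E x y = ((x mod 3 + 1) mod 3 = y mod 3 \<and> \<not> E x y)"
definition gad :: "nat \<Rightarrow> (nat \<Rightarrow> nat \<Rightarrow> bool) \<Rightarrow> nat \<Rightarrow> nat list" where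
  "gad N E k = (if swc E (k div N) (k mod N) then swapg N (k div N) (k mod N) else plain N @ plain N)"
definition wrd :: "nat \<Rightarrow> (nat \<Rightarrow> nat \<Rightarrow> bool) \<Rightarrow> nat list" where
  "wrd N E = rrev N @ plain N @ concat (map (gad N E) [0..<N*N])"

lemma set_plain: "set (plain N) = {0..<N}"
  using mod3_cases unfolding plain_def blk_def by auto

lemma set_wrd: assumes "0 < N" shows "set (wrd N E) = {0..<N}"
proof -
  have "set (rrev N) \<subseteq> {0..<N}" unfolding rrev_def blk_def by auto
  moreover have "set (gad N E k) \<subseteq> {0..<N}" if "k < N*N" for k
  proof -
    have "k div N < N" using that by (simp add: less_mult_imp_div_less)
    moreover have "k mod N < N" using assms by simp
    ultimately show ?thesis unfolding gad_def swapg_def blk_def blkm_def plain_def by auto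
  qed
  ultimately show ?thesis unfolding wrd_def using set_plain by fastforce
qed

lemma wrd_cross_edge:
  assumes "u \<noteq> v" "u mod 3 \<noteq> v mod 3" "u < N" "v < N" "E u v" "E v u"
  shows "alternate (wrd N E) u v"
proof -
  define pq where "pq = (if u mod 3 < v mod 3 then [u,v] else [v,u])"
  have g: "filter (\<lambda>z. z = u \<or> z = v) (gad N E k) = pq @ pq" for k
  proof (cases "swc E (k div N) (k mod N)")
    case True
    then have "\<not>((k div N = u \<and> k mod N = v) \<or> (k div N = v \<and> k mod N = u))"
      and "(k div N mod 3 + 1) mod 3 = k mod N mod 3"
      using assms unfolding swc_def by auto
    then show ?thesis using True assms F_swapg_other F_plain unfolding gad_def pq_def by simp
  next
    case False
    then show ?thesis using assms F_plain unfolding gad_def pq_def by simp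
  qed
  have "filter (\<lambda>z. z = u \<or> z = v) (wrd N E) = concat (replicate (2 + 2 * (N*N)) pq)"
    unfolding wrd_def using assms
    by (simp add: F_plain F_rrev g filter_concat o_def map_replicate_const concat_rep2 pq_def[symmetric])
  note eq = this
  show ?thesis
  proof (cases "u mod 3 < v mod 3")
    case True
    then have eq2: "filter (\<lambda>z. z = u \<or> z = v) (wrd N E) = concat (replicate (2 + 2 * (N*N)) [u,v])"
      using eq unfolding pq_def by simp
    show ?thesis unfolding alternate_def by (rule alt_rep[OF _ eq2]) (use assms in auto)
  next
    case False
    then have eq2: "filter (\<lambda>z. z = u \<or> z = v) (wrd N E) = concat (replicate (2 + 2 * (N*N)) [v,u])"
      using eq unfolding pq_def by simp
    show ?thesis unfolding alternate_def by (rule alt_rep[OF _ eq2]) (use assms in auto)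
  qed
qed

lemma upt_split3: "k < M \<Longrightarrow> [0..<M] = [0..<k] @ k # [Suc k..<M]"
  using upt_add_eq_append[of 0 k "M-k"] upt_conv_Cons[of k M] by simp

lemma wrd_cross_nonedge:
  assumes "u \<noteq> v" "u mod 3 \<noteq> v mod 3" "u < N" "v < N" "\<not> E u v" "\<not> E v u"
  shows "\<not> alternate (wrd N E) u v"
proof -
  obtain x y where xy: "(x = u \<and> y = v) \<or> (x = v \<and> y = u)" "swc E x y"
  proof (cases "(u mod 3 + 1) mod 3 = v mod 3")
    case True then show ?thesis using that[of u v] assms unfolding swc_def by auto
  next
    case False
    then have "(v mod 3 + 1) mod 3 = u mod 3" using assms(2) mod3_cases[of u] mod3_cases[of v] by auto
    then show ?thesis using that[of v u] assms unfolding swc_def by auto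
  qed
  have xN: "x < N" "y < N" "x \<noteq> y" using xy assms by auto
  have P: "(\<lambda>z. z = x \<or> z = y) = (\<lambda>z. z = u \<or> z = v)" using xy by auto
  obtain A s B where AB: "filter (\<lambda>z. z = u \<or> z = v) (swapg N x y) = A @ [s,s] @ B"
    using F_swapg_self[of x y N] xN xy(2) P unfolding swc_def by auto
  define k0 where "k0 = x * N + y"
  have k0: "k0 div N = x" "k0 mod N = y" using xN unfolding k0_def by auto
  have "k0 < N * N"
  proof -
    have "x * N + y < x * N + N" using xN by simp
    also have "\<dots> = (x + 1) * N" by simp
    also have "\<dots> \<le> N * N" by (rule mult_le_mono1) (use xN in simp)
    finally show ?thesis unfolding k0_def .
  qed
  then have split: "[0..<N*N] = [0..<k0] @ k0 # [Suc k0..<N*N]" by (rule upt_split3)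
  have g: "gad N E k0 = swapg N x y" unfolding gad_def using k0 xy(2) by simp
  have "filter (\<lambda>z. z = u \<or> z = v) (wrd N E) =
      (filter (\<lambda>z. z = u \<or> z = v) (rrev N) @ filter (\<lambda>z. z = u \<or> z = v) (plain N) @
       concat (map (filter (\<lambda>z. z = u \<or> z = v)) (map (gad N E) [0..<k0])) @ A) @ [s,s] @
      (B @ concat (map (filter (\<lambda>z. z = u \<or> z = v)) (map (gad N E) [Suc k0..<N*N])))"
    unfolding wrd_def by (subst split) (simp add: filter_concat g AB)
  then show ?thesis unfolding alternate_def by (rule noalt)
qed

lemma wrd_same:
  assumes "u \<noteq> v" "u mod 3 = v mod 3" "u < N" "v < N"
  shows "\<not> alternate (wrd N E) u v"
proof -
  have "filter (\<lambda>z. z = u \<or> z = v) (wrd N E) = [max u v] @ [min u v, min u v] @ (max u v #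
     filter (\<lambda>z. z = u \<or> z = v) (concat (map (gad N E) [0..<N*N])))"
    using assms mod3_cases[of u] unfolding wrd_def rrev_def plain_def
    by (auto simp add: F_blk rev_filter[symmetric] max_def min_def simp del: filter_filter)
  then show ?thesis unfolding alternate_def by (rule noalt)
qed


theorem theorem20:
  fixes n a b :: nat
  assumes "0 < n" and "a \<noteq> b"
    and "0 < a" and "a < n" and "0 < b" and "b < n"
    and "\<not> 3 dvd a" and "\<not> 3 dvd b" and "\<not> 3 dvd (2*n - a)"
    and "\<not> 3 dvd (2*n - b)" and "\<not> 3 dvd n"
  shows "word_representable (circ_vertices (2*n)) (circ_adj (2*n) {a, b, n})"
proof -
  define E where "E = circ_adj (2*n) {a, b, n}"
  define N where "N = 2 * n"
  have sym: "E x y = E y x" for x y unfolding E_def circ_adj_def Let_def by auto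
  have col: "x mod 3 \<noteq> y mod 3" if "E x y" "x < N" "y < N" "x \<noteq> y" for x y
  proof
    assume m: "x mod 3 = y mod 3"
    define d where "d = (if x \<le> y then y - x else x - y)"
    have d3: "3 dvd d" using m unfolding d_def
      by (auto simp: mod_eq_dvd_iff_nat dvd_diff_nat) (metis mod_eq_dvd_iff_nat nat_le_linear)
    have "d < N" "0 < d" using that unfolding d_def by auto
    have "min d (2*n - d) \<in> {a, b, n}" using that(1) unfolding E_def circ_adj_def Let_def d_def by simp
    then show False using d3 assms \<open>d < N\<close> unfolding N_def min_def
      by (auto split: if_splits; presburger)
  qed
  have V: "circ_vertices (2*n) = {0..<N}" by (simp add: circ_vertices_def N_def)
  have N0: "0 < N" using assms(1) unfolding N_def by simp
  show ?thesis unfolding word_representable_def V E_def[symmetric]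
  proof (intro exI[of _ "wrd N E"] conjI ballI impI)
    show "set (wrd N E) = {0..<N}" using set_wrd[OF N0] .
  next
    fix x y assume xy: "x \<in> {0..<N}" "y \<in> {0..<N}" "x \<noteq> y"
    show "E x y = alternate (wrd N E) x y"
    proof (cases "x mod 3 = y mod 3")
      case True
      then show ?thesis using col[of x y] wrd_same[of x y N E] xy by auto
    next
      case False
      then show ?thesis using wrd_cross_edge[of x y N E] wrd_cross_nonedge[of x y N E] sym[of x y] xy
        by auto
    qed
  qed
qed

end
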